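(* Let $L\ge2$, $i^*\in\{1,\dots,L-1\}$, $N\ge d_x$, and $X_\epsilon$ of rank $d_x$. Let $F:\mathbb R^{d_x}\to\mathbb R^{d_{i^*}}$ be any function, $F(X)\in\mathbb R^{d_{i^*}\times N}$ the matrix with columns $F(x_i)$, and $\tilde W\in\mathbb R^{d_y\times d_{i^*}}$ with $\tilde WF(X)=Y$. Assume $p\ge\mathrm{rank}\big(YX_\epsilon^T(X_\epsilon X_\epsilon^T)^{-1}\big)$ and $\min_{0\le i\le i^*}d_i\ge\mathrm{rank}\big(F(X)X_\epsilon^T(X_\epsilon X_\epsilon^T)^{-1}\big)$. Consider the loss $$\mathcal L_{st}^F(W_L,\dots,W_1)=\|W_{L:1}X_\epsilon-Y\|_F^2+\lambda\|W_{i^*:1}X_\epsilon-F(X)\|_F^2 .$$ Then every global minimizer of $\mathcal L_{base}$ and every global minimizer of $\mathcal L_{st}^F$ have end-to-end matrix $W_{L:1}=YX_\epsilon^T(X_\epsilon X_\epsilon^T)^{-1}$.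
   Context: Clean inputs $x_i\in\mathbb R^{d_x}$, targets $y_i\in\mathbb R^{d_y}$, noise $\epsilon_i\in\mathbb R^{d_x}$, $i=1,\dots,N$; $X_\epsilon$ has columns $x_i+\epsilon_i$, $Y\in\mathbb R^{d_y\times N}$ has columns $y_i$. A deep linear network with $L$ layers is a tuple $(W_L,\dots,W_1)$ with $W_i\in\mathbb R^{d_i\times d_{i-1}}$, $d_0=d_x$, $d_L=d_y$; $W_{i:j}:=W_iW_{i-1}\cdots W_j$; $p:=\min_{0\le i\le L}d_i$. Base loss: $\mathcal L_{base}(W_L,\dots,W_1)=\|W_{L:1}X_\epsilon-Y\|_F^2$. $\lambda>0$ is fixed. *)

theory Defs
  imports "Jordan_Normal_Form.Gauss_Jordan_Elimination" "Jordan_Normal_Form.DL_Rank"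
begin

definition frob_sq :: "real mat \<Rightarrow> real" where
  "frob_sq A = (\<Sum>i<dim_row A. \<Sum>j<dim_col A. (A $$ (i, j))\<^sup>2)"

definition mrank :: "real mat \<Rightarrow> nat" where
  "mrank A = vec_space.rank (dim_row A) A"

definition minv :: "real mat \<Rightarrow> real mat" where
  "minv A = the (mat_inverse A)"

text \<open>Partial products W_{k:1} = W_k W_{k-1} ... W_1 of a network W
  (layers indexed 1..L); W_{0:1} is the identity of size d_0 = n.\<close>
fun wprod :: "(nat \<Rightarrow> real mat) \<Rightarrow> nat \<Rightarrow> nat \<Rightarrow> real mat" where
  "wprod W n 0 = 1\<^sub>m n"
| "wprod W n (Suc k) = W (Suc k) * wprod W n k"

definition is_net :: "(nat \<Rightarrow> nat) \<Rightarrow> nat \<Rightarrow> (nat \<Rightarrow> real mat) \<Rightarrow> bool" where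
  "is_net d L W \<longleftrightarrow> (\<forall>i\<in>{1..L}. W i \<in> carrier_mat (d i) (d (i - 1)))"

definition pmin :: "(nat \<Rightarrow> nat) \<Rightarrow> nat \<Rightarrow> nat" where
  "pmin d L = Min (d ` {0..L})"

definition apply_cols :: "(real vec \<Rightarrow> real vec) \<Rightarrow> nat \<Rightarrow> real mat \<Rightarrow> real mat" where
  "apply_cols F m X = mat m (dim_col X) (\<lambda>(r, c). F (col X c) $ r)"

definition loss_base :: "(nat \<Rightarrow> nat) \<Rightarrow> nat \<Rightarrow> real mat \<Rightarrow> real mat \<Rightarrow> (nat \<Rightarrow> real mat) \<Rightarrow> real" where
  "loss_base d L Xe Y W = frob_sq (wprod W (d 0) L * Xe - Y)"

definition loss_st :: "(nat \<Rightarrow> nat) \<Rightarrow> nat \<Rightarrow> nat \<Rightarrow> real \<Rightarrow> real mat \<Rightarrow> real mat \<Rightarrow> real mat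
    \<Rightarrow> (nat \<Rightarrow> real mat) \<Rightarrow> real" where
  "loss_st d L istar lam Xe Y FX W =
     frob_sq (wprod W (d 0) L * Xe - Y) + lam * frob_sq (wprod W (d 0) istar * Xe - FX)"

definition is_global_min :: "(nat \<Rightarrow> nat) \<Rightarrow> nat \<Rightarrow> ((nat \<Rightarrow> real mat) \<Rightarrow> real)
    \<Rightarrow> (nat \<Rightarrow> real mat) \<Rightarrow> bool" where
  "is_global_min d L f W \<longleftrightarrow> is_net d L W \<and> (\<forall>V. is_net d L V \<longrightarrow> f W \<le> f V)"

end

theory Submission
  imports Defs
begin


definition Jm :: "nat \<Rightarrow> nat \<Rightarrow> real mat" where
  "Jm m n = mat m n (\<lambda>(i,j). if i = j then 1 else 0)"

lemma Jm_carrier[simp]: "Jm m n \<in> carrier_mat m n" unfolding Jm_def by auto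
lemma Jm_dim[simp]: "dim_row (Jm m n) = m" "dim_col (Jm m n) = n" unfolding Jm_def by auto

lemma Jm_Jm: "r \<le> n \<Longrightarrow> Jm r n * Jm n r = 1\<^sub>m r"
proof (rule eq_matI)
  fix i j assume "r \<le> n" "i < dim_row (1\<^sub>m r)" "j < dim_col (1\<^sub>m r)"
  hence ij: "i < r" "j < r" "i < n" "j < n" by auto
  have "(Jm r n * Jm n r) $$ (i,j) = (\<Sum>k<n. (if i = k then 1 else 0) * (if k = j then 1 else 0))"
    using ij unfolding Jm_def by (auto simp: scalar_prod_def atLeast0LessThan intro!: sum.cong)
  also have "\<dots> = (\<Sum>k<n. if k = i then (if i = j then 1 else 0) else 0)"
    by (rule sum.cong) auto
  also have "\<dots> = (if i = j then 1 else 0)"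
    using ij by (simp add: sum.delta)
  finally show "(Jm r n * Jm n r) $$ (i,j) = 1\<^sub>m r $$ (i,j)" using ij by auto
qed (auto simp: Jm_def)

lemma wprod_carrier:
  assumes "is_net d L W" "k \<le> L"
  shows "wprod W (d 0) k \<in> carrier_mat (d k) (d 0)"
  using assms(2)
proof (induction k)
  case 0 then show ?case by simp
next
  case (Suc k)
  have "W (Suc k) \<in> carrier_mat (d (Suc k)) (d k)" using assms(1) Suc.prems unfolding is_net_def by force
  then show ?case using Suc by auto
qed

definition extW :: "(nat \<Rightarrow> nat) \<Rightarrow> nat \<Rightarrow> nat \<Rightarrow> nat \<Rightarrow> real mat \<Rightarrow> real mat \<Rightarrow> (nat \<Rightarrow> real mat) \<Rightarrow> nat \<Rightarrow> real mat" where
  "extW d a b r U V W0 i = (if a < i \<and> i \<le> b then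
     (if i = b then U else Jm (d i) r) * (if i = Suc a then V else Jm r (d (i - 1))) else W0 i)"

lemma extW_low: "k \<le> a \<Longrightarrow> wprod (extW d a b r U V W0) n k = wprod W0 n k"
  by (induction k) (auto simp: extW_def)

lemma extW_carrier:
  assumes "a < i" "i \<le> b" "U \<in> carrier_mat (d b) r" "V \<in> carrier_mat r (d a)"
  shows "extW d a b r U V W0 i \<in> carrier_mat (d i) (d (i - 1))"
  using assms unfolding extW_def by (auto intro!: mult_carrier_mat[of _ _ r])

lemma extW_prod:
  assumes ab: "a < b" and r: "\<forall>i\<in>{a..b}. r \<le> d i"
  and U: "U \<in> carrier_mat (d b) r" and V: "V \<in> carrier_mat r (d a)"
  and Z: "wprod W0 n a \<in> carrier_mat (d a) n"
  shows "wprod (extW d a b r U V W0) n b = U * V * wprod W0 n a"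
proof -
  let ?W = "extW d a b r U V W0"
  let ?Z = "wprod W0 n a"
  define A where "A k = (if k = b then U else Jm (d k) r)" for k
  have Ac: "A k \<in> carrier_mat (d k) r" if "k \<le> b" for k using U that unfolding A_def by auto
  have "a < k \<Longrightarrow> k \<le> b \<Longrightarrow> wprod ?W n k = A k * V * ?Z" for k
  proof (induction k)
    case 0 then show ?case by simp
  next
    case (Suc k)
    show ?case
    proof (cases "k = a")
      case True
      have "wprod ?W n (Suc k) = ?W (Suc a) * ?Z" using True extW_low[of a a] by simp
      also have "?W (Suc a) = A (Suc a) * V" using Suc.prems True unfolding extW_def A_def by auto
      finally show ?thesis using True by simp
    next
      case False
      hence ak: "a < k" "k < b" using Suc.prems by auto
      have IH: "wprod ?W n k = Jm (d k) r * V * ?Z" using Suc.IH ak unfolding A_def by auto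
      have Wk: "?W (Suc k) = A (Suc k) * Jm r (d k)" using ak unfolding extW_def A_def by auto
      have rk: "r \<le> d k" using r ak by auto
      have c1: "A (Suc k) \<in> carrier_mat (d (Suc k)) r" using Ac ak by auto
      have "wprod ?W n (Suc k) = A (Suc k) * Jm r (d k) * (Jm (d k) r * V * ?Z)" using IH Wk by simp
      also have "\<dots> = A (Suc k) * (Jm r (d k) * (Jm (d k) r * V * ?Z))"
        using c1 V Z by (intro assoc_mult_mat) auto
      also have "Jm (d k) r * V * ?Z = Jm (d k) r * (V * ?Z)"
        using V Z by (intro assoc_mult_mat) auto
      also have "Jm r (d k) * (Jm (d k) r * (V * ?Z)) = (Jm r (d k) * Jm (d k) r) * (V * ?Z)"
        using V Z by (intro assoc_mult_mat[symmetric]) auto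
      also have "\<dots> = V * ?Z" using Jm_Jm[OF rk] V Z by auto
      also have "A (Suc k) * (V * ?Z) = A (Suc k) * V * ?Z"
        using c1 V Z by (intro assoc_mult_mat[symmetric]) auto
      finally show ?thesis .
    qed
  qed
  from this[of b] ab show ?thesis unfolding A_def by simp
qed



lemma minv_props:
  fixes A :: "real mat"
  assumes A: "A \<in> carrier_mat n n"
    and ker: "\<And>v. v \<in> carrier_vec n \<Longrightarrow> A *\<^sub>v v = 0\<^sub>v n \<Longrightarrow> v = 0\<^sub>v n"
  shows "minv A \<in> carrier_mat n n \<and> A * minv A = 1\<^sub>m n \<and> minv A * A = 1\<^sub>m n"
proof -
  have "det A \<noteq> 0" using det_0_iff_vec_prod_zero_field[OF A] ker by blast
  from det_non_zero_imp_unit[OF A this, of "()"]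
  have U: "A \<in> Units (ring_mat TYPE(real) n ())" .
  have "mat_inverse A \<noteq> None" using mat_inverse(1)[OF A, of "()"] U by auto
  then obtain B where B: "mat_inverse A = Some B" by auto
  from mat_inverse(2)[OF A B] show ?thesis unfolding minv_def B by simp
qed

lemma self_scalar_zero:
  fixes w :: "real vec"
  assumes "w \<in> carrier_vec m" "w \<bullet> w = 0"
  shows "w = 0\<^sub>v m"
proof -
  have "(\<Sum>i\<in>{0..<m}. w $ i * w $ i) = 0" using assms unfolding scalar_prod_def by auto
  hence "\<forall>i\<in>{0..<m}. w $ i * w $ i = 0"
    by (subst sum_nonneg_eq_0_iff[symmetric]) auto
  thus ?thesis using assms by (intro eq_vecI) auto
qed

lemma gram_ker:
  fixes A :: "real mat"
  assumes A: "A \<in> carrier_mat m n" and v: "v \<in> carrier_vec n"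
    and z: "(transpose_mat A * A) *\<^sub>v v = 0\<^sub>v n"
  shows "A *\<^sub>v v = 0\<^sub>v m"
proof -
  let ?w = "A *\<^sub>v v"
  have w: "?w \<in> carrier_vec m" using A v by auto
  have "transpose_mat A *\<^sub>v ?w = 0\<^sub>v n" using z A v by (simp add: assoc_mult_mat_vec[of _ n m])
  hence "(transpose_mat A *\<^sub>v ?w) \<bullet> v = 0" using v by simp
  hence "?w \<bullet> ?w = 0" using transpose_vec_mult_scalar[OF A v w] by simp
  thus ?thesis using self_scalar_zero w by blast
qed

lemma maxind:
  fixes M :: "real mat"
  assumes M: "M \<in> carrier_mat m n"
  shows "\<exists>ss. distinct ss \<and> set ss \<subseteq> set (cols M) \<and> vec_space.rank m M = length ss
     \<and> (\<forall>c\<in>set (cols M). \<exists>w\<in>carrier_vec (length ss). c = mat_of_cols m ss *\<^sub>v w)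
     \<and> (\<forall>v\<in>carrier_vec (length ss). mat_of_cols m ss *\<^sub>v v = 0\<^sub>v m \<longrightarrow> v = 0\<^sub>v (length ss))"
proof -
  interpret vec_space "TYPE(real)" m .
  obtain S where S: "maximal S (\<lambda>T. T \<subseteq> set (cols M) \<and> lin_indpt T)"
    using maximal_exists[of "(\<lambda>T. T \<subseteq> set (cols M) \<and> lin_indpt T)" "card (set (cols M))" "{}"]
    by (meson List.finite_set card_mono empty_iff empty_subsetI finite_lin_indpt2 rev_finite_subset)
  have Ssub: "S \<subseteq> set (cols M)" and Sli: "lin_indpt S" using S unfolding maximal_def by auto
  have fin: "finite S" using Ssub finite_subset by blast
  have rk: "rank M = card S" using rank_card_indpt[OF M S] .
  obtain ss where ss: "distinct ss" "set ss = S" using finite_distinct_list[OF fin] by auto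
  have colsM: "set (cols M) \<subseteq> carrier_vec m" using M cols_dim by blast
  have Scar: "set ss \<subseteq> carrier_vec m" using ss Ssub colsM by auto
  let ?U = "mat_of_cols m ss"
  have cU: "cols ?U = ss" using Scar by simp
  have len: "length ss = card S" using ss distinct_card by fastforce
  have span: "\<forall>c\<in>set (cols M). \<exists>w\<in>carrier_vec (length ss). c = ?U *\<^sub>v w"
  proof
    fix c assume c: "c \<in> set (cols M)"
    have cc: "c \<in> carrier_vec m" using c colsM by auto
    have "c \<in> span S"
    proof (cases "c \<in> S")
      case True then show ?thesis using in_own_span Ssub colsM by blast
    next
      case False
      have "\<not> lin_indpt (S \<union> {c})"
      proof
        assume li: "lin_indpt (S \<union> {c})"
        have "S \<union> {c} \<subseteq> set (cols M)" using Ssub c by auto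
        with li S False show False unfolding maximal_def by blast
      qed
      then show ?thesis using lin_dep_iff_in_span[of S c] Ssub colsM Sli cc False by auto
    qed
    hence "c \<in> span_list ss" using span_list_as_span[OF Scar] ss by simp
    then obtain f where "c = lincomb_list f ss" unfolding span_list_def by auto
    also have "\<dots> = ?U *\<^sub>v vec (length ss) f"
      by (rule lincomb_list_as_mat_mult) (use Scar in auto)
    finally show "\<exists>w\<in>carrier_vec (length ss). c = ?U *\<^sub>v w" by auto
  qed
  have ker: "\<forall>v\<in>carrier_vec (length ss). ?U *\<^sub>v v = 0\<^sub>v m \<longrightarrow> v = 0\<^sub>v (length ss)"
  proof (intro ballI impI, rule ccontr)
    fix v assume v: "v \<in> carrier_vec (length ss)" "?U *\<^sub>v v = 0\<^sub>v m" "v \<noteq> 0\<^sub>v (length ss)"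
    have "lin_dep (set (cols ?U))" using lin_depI[OF mat_of_cols_carrier(1) v(1) v(3) v(2)] cU ss by auto
    thus False using Sli cU ss by auto
  qed
  show ?thesis using ss Ssub rk len span ker by auto
qed



lemma factor:
  fixes M :: "real mat"
  assumes M: "M \<in> carrier_mat m n"
  shows "\<exists>U K. U \<in> carrier_mat m (vec_space.rank m M) \<and> K \<in> carrier_mat (vec_space.rank m M) m
     \<and> U * K * M = M"
proof -
  obtain ss where ss: "distinct ss" "set ss \<subseteq> set (cols M)" "vec_space.rank m M = length ss"
     "\<forall>c\<in>set (cols M). \<exists>w\<in>carrier_vec (length ss). c = mat_of_cols m ss *\<^sub>v w"
     "\<forall>v\<in>carrier_vec (length ss). mat_of_cols m ss *\<^sub>v v = 0\<^sub>v m \<longrightarrow> v = 0\<^sub>v (length ss)"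
    using maxind[OF M] by blast
  define r where "r = length ss"
  define U where "U = mat_of_cols m ss"
  have U: "U \<in> carrier_mat m r" unfolding U_def r_def by simp
  have "\<forall>j. \<exists>w. j < n \<longrightarrow> w \<in> carrier_vec r \<and> col M j = U *\<^sub>v w"
  proof
    fix j
    show "\<exists>w. j < n \<longrightarrow> w \<in> carrier_vec r \<and> col M j = U *\<^sub>v w"
    proof (cases "j < n")
      case True
      hence "col M j \<in> set (cols M)" using M by (metis carrier_matD(2) cols_length cols_nth nth_mem)
      then show ?thesis using ss(4) unfolding U_def r_def by blast
    qed auto
  qed
  then obtain wf where wf: "\<And>j. j < n \<Longrightarrow> wf j \<in> carrier_vec r \<and> col M j = U *\<^sub>v wf j" by metis
  define C where "C = mat r n (\<lambda>(i,j). wf j $ i)"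
  have C: "C \<in> carrier_mat r n" unfolding C_def by simp
  have colC: "col C j = wf j" if "j < n" for j
    using wf[OF that] that unfolding C_def by (intro eq_vecI) auto
  have MUC: "M = U * C"
  proof (rule eq_matI)
    fix i j assume ij: "i < dim_row (U * C)" "j < dim_col (U * C)"
    hence ij': "i < m" "j < n" using U C by auto
    have "(U * C) $$ (i,j) = row U i \<bullet> col C j" using ij by simp
    also have "\<dots> = (U *\<^sub>v wf j) $ i" using colC ij' U by simp
    also have "\<dots> = col M j $ i" using wf[OF ij'(2)] by simp
    also have "\<dots> = M $$ (i,j)" using ij' M by (simp add: index_col)
    finally show "M $$ (i,j) = (U * C) $$ (i,j)" by simp
  qed (use U C M in auto)
  define G where "G = transpose_mat U * U"
  have G: "G \<in> carrier_mat r r" unfolding G_def using U by auto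
  have kerG: "v = 0\<^sub>v r" if v: "v \<in> carrier_vec r" "G *\<^sub>v v = 0\<^sub>v r" for v
  proof -
    have "U *\<^sub>v v = 0\<^sub>v m" using gram_ker[OF U v(1)] v(2) unfolding G_def by simp
    thus ?thesis using ss(5) v(1) unfolding U_def r_def by blast
  qed
  obtain Gi where Gi: "Gi \<in> carrier_mat r r" "G * Gi = 1\<^sub>m r" "Gi * G = 1\<^sub>m r"
    using minv_props[OF G kerG] by blast
  define K where "K = Gi * transpose_mat U"
  have K: "K \<in> carrier_mat r m" unfolding K_def using Gi U by auto
  have UT: "transpose_mat U \<in> carrier_mat r m" using U by simp
  have "K * U = Gi * G" unfolding K_def G_def using assoc_mult_mat[OF Gi(1) UT U] .
  hence KU: "K * U = 1\<^sub>m r" using Gi by simp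
  have "U * K * M = U * (K * M)" using U K M by (intro assoc_mult_mat) auto
  also have "K * M = K * U * C" using MUC assoc_mult_mat[OF K U C] by simp
  also have "\<dots> = C" using KU C by simp
  finally have "U * K * M = M" using MUC by simp
  thus ?thesis using U K ss(3) unfolding r_def by metis
qed

lemma gram_inv:
  fixes Xe :: "real mat"
  assumes Xe: "Xe \<in> carrier_mat m n" and rk: "vec_space.rank m Xe = m"
  shows "minv (Xe * transpose_mat Xe) \<in> carrier_mat m m
      \<and> (Xe * transpose_mat Xe) * minv (Xe * transpose_mat Xe) = 1\<^sub>m m
      \<and> minv (Xe * transpose_mat Xe) * (Xe * transpose_mat Xe) = 1\<^sub>m m"
proof (rule minv_props)
  show "Xe * transpose_mat Xe \<in> carrier_mat m m" using Xe by auto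
  fix v assume v: "v \<in> carrier_vec m" "(Xe * transpose_mat Xe) *\<^sub>v v = 0\<^sub>v m"
  have XT: "transpose_mat Xe \<in> carrier_mat n m" using Xe by auto
  have XTv: "transpose_mat Xe *\<^sub>v v = 0\<^sub>v n"
    using gram_ker[OF XT v(1)] v(2) by simp
  obtain ss where ss: "distinct ss" "set ss \<subseteq> set (cols Xe)" "vec_space.rank m Xe = length ss"
     "\<forall>v\<in>carrier_vec (length ss). mat_of_cols m ss *\<^sub>v v = 0\<^sub>v m \<longrightarrow> v = 0\<^sub>v (length ss)"
    using maxind[OF Xe] by blast
  define B where "B = mat_of_cols m ss"
  have B: "B \<in> carrier_mat m m" unfolding B_def using ss(3) rk by (metis mat_of_cols_carrier(1))
  have "det B \<noteq> 0" using det_0_iff_vec_prod_zero_field[OF B] ss(3,4) rk unfolding B_def by auto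
  hence "det (transpose_mat B) \<noteq> 0" using det_transpose[OF B] by simp
  hence kerBT: "\<And>w. w \<in> carrier_vec m \<Longrightarrow> transpose_mat B *\<^sub>v w = 0\<^sub>v m \<Longrightarrow> w = 0\<^sub>v m"
    using det_0_iff_vec_prod_zero_field[of "transpose_mat B" m] B by auto
  have colsX: "set (cols Xe) \<subseteq> carrier_vec m" using Xe cols_dim by blast
  have "transpose_mat B *\<^sub>v v = 0\<^sub>v m"
  proof (rule eq_vecI)
    fix k assume "k < dim_vec (0\<^sub>v m :: real vec)"
    hence k: "k < m" by simp
    have klen: "k < length ss" using k ss(3) rk by simp
    have "ss ! k \<in> set (cols Xe)" using ss(2) klen by auto
    then obtain j where j: "j < n" "ss ! k = col Xe j"
      using Xe by (metis carrier_matD(2) cols_length cols_nth in_set_conv_nth)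
    have "(transpose_mat B *\<^sub>v v) $ k = col B k \<bullet> v" using k B by simp
    also have "col B k = ss ! k" unfolding B_def using klen ss(2) colsX by (intro col_mat_of_cols) (auto intro: nth_mem)
    also have "ss ! k = col Xe j" by (rule j(2))
    also have "col Xe j \<bullet> v = (transpose_mat Xe *\<^sub>v v) $ j" using j Xe by simp
    also have "\<dots> = 0" using XTv j by simp
    finally show "(transpose_mat B *\<^sub>v v) $ k = 0\<^sub>v m $ k" using j k by simp
  qed (use B in simp)
  thus "v = 0\<^sub>v m" using kerBT v(1) by blast
qed



lemma frob_nonneg: "frob_sq A \<ge> 0"
  unfolding frob_sq_def by (intro sum_nonneg) auto

lemma frob_zero:
  assumes A: "A \<in> carrier_mat m n" and z: "frob_sq A = 0"
  shows "A = 0\<^sub>m m n"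
proof (rule eq_matI)
  fix i j assume ij: "i < dim_row (0\<^sub>m m n :: real mat)" "j < dim_col (0\<^sub>m m n :: real mat)"
  hence ij': "i < m" "j < n" by auto
  have "\<forall>i\<in>{..<m}. (\<Sum>j<n. (A $$ (i, j))\<^sup>2) = 0"
    using z A unfolding frob_sq_def by (subst sum_nonneg_eq_0_iff[symmetric]) (auto intro: sum_nonneg)
  hence "(\<Sum>j<n. (A $$ (i, j))\<^sup>2) = 0" using ij' by auto
  hence "\<forall>j\<in>{..<n}. (A $$ (i, j))\<^sup>2 = 0" by (subst sum_nonneg_eq_0_iff[symmetric]) auto
  thus "A $$ (i,j) = 0\<^sub>m m n $$ (i,j)" using ij' by auto
qed (use A in auto)

lemma frob_pyth:
  fixes P Q D X :: "real mat"
  assumes P: "P \<in> carrier_mat m n" and Q: "Q \<in> carrier_mat m n"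
    and D: "D \<in> carrier_mat m k" and X: "X \<in> carrier_mat k n"
    and PDX: "P = D * X" and QX: "Q * transpose_mat X = 0\<^sub>m m k"
  shows "frob_sq (P + Q) = frob_sq P + frob_sq Q"
proof -
  have cross: "(\<Sum>i<m. \<Sum>j<n. P $$ (i,j) * Q $$ (i,j)) = 0"
  proof -
    have "(\<Sum>i<m. \<Sum>j<n. P $$ (i,j) * Q $$ (i,j))
        = (\<Sum>i<m. \<Sum>j<n. (\<Sum>l<k. D $$ (i,l) * X $$ (l,j)) * Q $$ (i,j))"
      using D X unfolding PDX by (intro sum.cong refl) (auto simp: scalar_prod_def atLeast0LessThan)
    also have "\<dots> = (\<Sum>i<m. \<Sum>l<k. D $$ (i,l) * (\<Sum>j<n. Q $$ (i,j) * X $$ (l,j)))"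
    proof (rule sum.cong[OF refl])
      fix i
      have "(\<Sum>j<n. (\<Sum>l<k. D$$(i,l) * X$$(l,j)) * Q$$(i,j))
          = (\<Sum>j<n. \<Sum>l<k. D$$(i,l) * (Q$$(i,j) * X$$(l,j)))"
        by (rule sum.cong[OF refl], subst sum_distrib_right, rule sum.cong[OF refl], simp add: mult_ac)
      also have "\<dots> = (\<Sum>l<k. \<Sum>j<n. D$$(i,l) * (Q$$(i,j) * X$$(l,j)))" by (rule sum.swap)
      also have "\<dots> = (\<Sum>l<k. D $$ (i,l) * (\<Sum>j<n. Q $$ (i,j) * X $$ (l,j)))" by (simp add: sum_distrib_left)
      finally show "(\<Sum>j<n. (\<Sum>l<k. D$$(i,l) * X$$(l,j)) * Q$$(i,j))
          = (\<Sum>l<k. D $$ (i,l) * (\<Sum>j<n. Q $$ (i,j) * X $$ (l,j)))" .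
    qed
    also have "\<dots> = 0"
    proof (intro sum.neutral ballI)
      fix i l assume il: "i \<in> {..<m}" "l \<in> {..<k}"
      have "(\<Sum>j<n. Q $$ (i,j) * X $$ (l,j)) = (Q * transpose_mat X) $$ (i,l)"
        using il Q X by (auto simp: scalar_prod_def atLeast0LessThan)
      also have "\<dots> = 0" using QX il by simp
      finally show "D $$ (i,l) * (\<Sum>j<n. Q $$ (i,j) * X $$ (l,j)) = 0" by simp
    qed
    finally show ?thesis .
  qed
  have "frob_sq (P + Q) = (\<Sum>i<m. \<Sum>j<n. (P $$ (i,j))\<^sup>2 + (Q $$ (i,j))\<^sup>2 + 2 * (P $$ (i,j) * Q $$ (i,j)))"
    unfolding frob_sq_def using P Q by (intro sum.cong refl) (auto simp: power2_sum)
  also have "\<dots> = frob_sq P + frob_sq Q + 2 * (\<Sum>i<m. \<Sum>j<n. P $$ (i,j) * Q $$ (i,j))"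
    unfolding frob_sq_def using P Q by (simp add: sum.distrib sum_distrib_left)
  finally show ?thesis using cross by simp
qed

lemma ls_opt:
  fixes Xe Y Ai W :: "real mat"
  assumes Xe: "Xe \<in> carrier_mat dx N" and Y: "Y \<in> carrier_mat m N"
    and Ai: "Ai \<in> carrier_mat dx dx" and AAi: "(Xe * transpose_mat Xe) * Ai = 1\<^sub>m dx"
    and AiA: "Ai * (Xe * transpose_mat Xe) = 1\<^sub>m dx"
    and W: "W \<in> carrier_mat m dx"
  shows "frob_sq (W * Xe - Y) = frob_sq ((W - Y * transpose_mat Xe * Ai) * Xe)
            + frob_sq (Y * transpose_mat Xe * Ai * Xe - Y)"
    and "frob_sq (W * Xe - Y) \<le> frob_sq (Y * transpose_mat Xe * Ai * Xe - Y)
            \<Longrightarrow> W = Y * transpose_mat Xe * Ai"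
proof -
  define T where "T = Y * transpose_mat Xe"
  define Ms where "Ms = T * Ai"
  define A where "A = Xe * transpose_mat Xe"
  have XT: "transpose_mat Xe \<in> carrier_mat N dx" using Xe by simp
  have T: "T \<in> carrier_mat m dx" unfolding T_def using Y XT by simp
  have Ms: "Ms \<in> carrier_mat m dx" unfolding Ms_def using T Ai by simp
  have A: "A \<in> carrier_mat dx dx" unfolding A_def using Xe XT by simp
  have MsA: "Ms * Xe * transpose_mat Xe = T"
  proof -
    have "Ms * Xe * transpose_mat Xe = Ms * A" unfolding A_def using assoc_mult_mat[OF Ms Xe XT] .
    also have "\<dots> = T * (Ai * A)" unfolding Ms_def using assoc_mult_mat[OF T Ai A] .
    also have "\<dots> = T" using AiA T unfolding A_def by simp
    finally show ?thesis .
  qed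
  have QX: "(Ms * Xe - Y) * transpose_mat Xe = 0\<^sub>m m dx"
  proof -
    have "(Ms * Xe - Y) * transpose_mat Xe = Ms * Xe * transpose_mat Xe - Y * transpose_mat Xe"
      using Ms Xe Y XT by (intro minus_mult_distrib_mat) auto
    also have "\<dots> = T - T" using MsA unfolding T_def by simp
    also have "\<dots> = 0\<^sub>m m dx" using T by simp
    finally show ?thesis .
  qed
  have WMs: "W - Ms \<in> carrier_mat m dx" using Ms by (rule minus_carrier_mat)
  have sum: "(W - Ms) * Xe + (Ms * Xe - Y) = W * Xe - Y"
  proof -
    have "(W - Ms) * Xe = W * Xe - Ms * Xe" using W Ms Xe by (intro minus_mult_distrib_mat) auto
    moreover have "W * Xe - Ms * Xe + (Ms * Xe - Y) = W * Xe - Y"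
      using W Ms Xe Y by (intro eq_matI) auto
    ultimately show ?thesis by simp
  qed
  have pyth: "frob_sq (W * Xe - Y) = frob_sq ((W - Ms) * Xe) + frob_sq (Ms * Xe - Y)"
  proof -
    have c1: "(W - Ms) * Xe \<in> carrier_mat m N" using WMs Xe by simp
    have c2: "Ms * Xe - Y \<in> carrier_mat m N" using Y by (rule minus_carrier_mat)
    show ?thesis using frob_pyth[OF c1 c2 WMs Xe refl QX] sum by simp
  qed
  thus "frob_sq (W * Xe - Y) = frob_sq ((W - Y * transpose_mat Xe * Ai) * Xe)
            + frob_sq (Y * transpose_mat Xe * Ai * Xe - Y)" unfolding Ms_def T_def .
  assume le: "frob_sq (W * Xe - Y) \<le> frob_sq (Y * transpose_mat Xe * Ai * Xe - Y)"
  have "frob_sq ((W - Ms) * Xe) = 0" using pyth le frob_nonneg[of "(W - Ms) * Xe"]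
    unfolding Ms_def T_def by linarith
  hence z: "(W - Ms) * Xe = 0\<^sub>m m N" using frob_zero[of "(W - Ms) * Xe" m N] WMs Xe by auto
  have "W - Ms = (W - Ms) * (A * Ai)" using AAi right_mult_one_mat[OF WMs] unfolding A_def by simp
  also have "\<dots> = (W - Ms) * A * Ai" using assoc_mult_mat[OF WMs A Ai] by simp
  also have "(W - Ms) * A = (W - Ms) * Xe * transpose_mat Xe" unfolding A_def using assoc_mult_mat[OF WMs Xe XT] by simp
  also have "\<dots> = 0\<^sub>m m dx" using z XT by simp
  also have "0\<^sub>m m dx * Ai = 0\<^sub>m m dx" using Ai by simp
  finally have "W - Ms = 0\<^sub>m m dx" .
  hence WM0: "W - Ms = 0\<^sub>m m dx" .
  have "W = Ms"
  proof (rule eq_matI)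
    fix i j assume ij: "i < dim_row Ms" "j < dim_col Ms"
    have "(W - Ms) $$ (i,j) = 0" using WM0 ij Ms by simp
    thus "W $$ (i,j) = Ms $$ (i,j)" using ij by simp
  qed (use W Ms in auto)
  thus "W = Y * transpose_mat Xe * Ai" unfolding Ms_def T_def .
qed



theorem mainTheorem9:
  fixes L istar N dx dy :: nat and d :: "nat \<Rightarrow> nat"
    and X E Y Wt :: "real mat" and F :: "real vec \<Rightarrow> real vec" and lam :: real
  assumes L: "L \<ge> 2"
    and istar: "1 \<le> istar" "istar \<le> L - 1"
    and d0: "d 0 = dx" and dL: "d L = dy"
    and N: "N \<ge> dx"
    and X: "X \<in> carrier_mat dx N" and E: "E \<in> carrier_mat dx N" and Y: "Y \<in> carrier_mat dy N"
    and rankX: "mrank (X + E) = dx"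
    and F: "\<And>v. v \<in> carrier_vec dx \<Longrightarrow> F v \<in> carrier_vec (d istar)"
    and Wt: "Wt \<in> carrier_mat dy (d istar)"
    and WtF: "Wt * apply_cols F (d istar) X = Y"
    and p: "pmin d L \<ge> mrank (Y * transpose_mat (X + E) * minv ((X + E) * transpose_mat (X + E)))"
    and q: "Min (d ` {0..istar}) \<ge>
             mrank (apply_cols F (d istar) X * transpose_mat (X + E) * minv ((X + E) * transpose_mat (X + E)))"
    and lam: "lam > 0"
  shows "(\<forall>W. is_global_min d L (loss_base d L (X + E) Y) W \<longrightarrow>
            wprod W dx L = Y * transpose_mat (X + E) * minv ((X + E) * transpose_mat (X + E)))
       \<and> (\<forall>W. is_global_min d L (loss_st d L istar lam (X + E) Y (apply_cols F (d istar) X)) W \<longrightarrow>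
            wprod W dx L = Y * transpose_mat (X + E) * minv ((X + E) * transpose_mat (X + E)))"
proof -
  define Xe where "Xe = X + E"
  define Ai where "Ai = minv (Xe * transpose_mat Xe)"
  define FX where "FX = apply_cols F (d istar) X"
  define Ms where "Ms = Y * transpose_mat Xe * Ai"
  define Gs where "Gs = FX * transpose_mat Xe * Ai"
  have Xe: "Xe \<in> carrier_mat dx N" unfolding Xe_def using X E by simp
  have XT: "transpose_mat Xe \<in> carrier_mat N dx" using Xe by simp
  have rk: "vec_space.rank dx Xe = dx" using rankX E unfolding mrank_def Xe_def by simp
  have Ai: "Ai \<in> carrier_mat dx dx" "(Xe * transpose_mat Xe) * Ai = 1\<^sub>m dx"
      "Ai * (Xe * transpose_mat Xe) = 1\<^sub>m dx"
    using gram_inv[OF Xe rk] unfolding Ai_def by auto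
  have FX: "FX \<in> carrier_mat (d istar) N" unfolding FX_def apply_cols_def using X by simp
  have Ms: "Ms \<in> carrier_mat dy dx" unfolding Ms_def using Y XT Ai by simp
  have Gs: "Gs \<in> carrier_mat (d istar) dx" unfolding Gs_def using FX XT Ai by simp
  have MsGs: "Wt * Gs = Ms"
  proof -
    have "Wt * Gs = Wt * (FX * transpose_mat Xe) * Ai" unfolding Gs_def
      using assoc_mult_mat[OF Wt mult_carrier_mat[OF FX XT] Ai(1)] by simp
    also have "Wt * (FX * transpose_mat Xe) = Wt * FX * transpose_mat Xe"
      using assoc_mult_mat[OF Wt FX XT] by simp
    finally show ?thesis unfolding Ms_def FX_def using WtF by simp
  qed
  have istarL: "istar < L" using istar L by simp
  obtain U K where U: "U \<in> carrier_mat dy (vec_space.rank dy Ms)"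
      and K: "K \<in> carrier_mat (vec_space.rank dy Ms) dy" and UKM: "U * K * Ms = Ms"
    using factor[OF Ms] by blast
  define r2 where "r2 = vec_space.rank dy Ms"
  have r2: "\<forall>i\<in>{0..L}. r2 \<le> d i"
  proof
    fix i assume i: "i \<in> {0..L}"
    have "r2 \<le> pmin d L" using p Y unfolding r2_def mrank_def Ms_def Ai_def Xe_def by simp
    also have "pmin d L \<le> d i" unfolding pmin_def using i by (intro Min_le) auto
    finally show "r2 \<le> d i" .
  qed
  have U': "U \<in> carrier_mat (d L) r2" using U dL unfolding r2_def by simp
  have K': "K \<in> carrier_mat r2 dy" using K unfolding r2_def by simp
  obtain P Q where P: "P \<in> carrier_mat (d istar) (vec_space.rank (d istar) Gs)"
      and Q: "Q \<in> carrier_mat (vec_space.rank (d istar) Gs) (d istar)" and PQG: "P * Q * Gs = Gs"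
    using factor[OF Gs] by blast
  define r1 where "r1 = vec_space.rank (d istar) Gs"
  have r1: "\<forall>i\<in>{0..istar}. r1 \<le> d i"
  proof
    fix i assume i: "i \<in> {0..istar}"
    have "r1 \<le> Min (d ` {0..istar})" using q FX[unfolded FX_def] unfolding r1_def mrank_def Gs_def Ai_def Xe_def FX_def by simp
    also have "\<dots> \<le> d i" using i by (intro Min_le) auto
    finally show "r1 \<le> d i" .
  qed
  have P': "P \<in> carrier_mat (d istar) r1" using P unfolding r1_def by simp
  have Q': "Q \<in> carrier_mat r1 (d istar)" using Q unfolding r1_def by simp
  define W0 :: "nat \<Rightarrow> real mat" where "W0 = (\<lambda>_. 1\<^sub>m 0)"
  have W00: "wprod W0 (d 0) 0 = 1\<^sub>m (d 0)" by simp
  define V1 where "V1 = extW d 0 L r2 U (K * Ms) W0"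
  have KMs: "K * Ms \<in> carrier_mat r2 (d 0)" using K' Ms d0 by simp
  have V1net: "is_net d L V1" unfolding is_net_def V1_def
    using extW_carrier[where a=0 and b=L and d=d and r=r2, OF _ _ U' KMs] by auto
  have "wprod V1 (d 0) L = U * (K * Ms) * 1\<^sub>m (d 0)"
    unfolding V1_def using extW_prod[OF _ r2 U' KMs, of W0 "d 0"] L by simp
  also have "\<dots> = Ms" using assoc_mult_mat[OF U' K' Ms] UKM Ms d0 by simp
  finally have V1prod: "wprod V1 dx L = Ms" using d0 by simp
  define V2a where "V2a = extW d 0 istar r1 P (Q * Gs) W0"
  have QGs: "Q * Gs \<in> carrier_mat r1 (d 0)" using Q' Gs d0 by simp
  have "wprod V2a (d 0) istar = P * (Q * Gs) * 1\<^sub>m (d 0)"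
    unfolding V2a_def using extW_prod[OF _ r1 P' QGs, of W0 "d 0"] istar by simp
  also have "\<dots> = Gs" using assoc_mult_mat[OF P' Q' Gs] PQG Gs d0 by simp
  finally have V2a_prod: "wprod V2a (d 0) istar = Gs" .
  define V2 where "V2 = extW d istar L r2 U (K * Wt) V2a"
  have KWt: "K * Wt \<in> carrier_mat r2 (d istar)" using K' Wt by simp
  have r2': "\<forall>i\<in>{istar..L}. r2 \<le> d i" using r2 by auto
  have V2net: "is_net d L V2" unfolding is_net_def
  proof
    fix i assume i: "i \<in> {1..L}"
    show "V2 i \<in> carrier_mat (d i) (d (i - 1))"
    proof (cases "istar < i")
      case True then show ?thesis unfolding V2_def using extW_carrier[where a=istar and b=L and d=d and r=r2, OF True _ U' KWt] i by auto
    next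
      case False
      hence "V2 i = V2a i" unfolding V2_def extW_def by auto
      then show ?thesis unfolding V2a_def using extW_carrier[where a=0 and b=istar and d=d and r=r1, OF _ _ P' QGs] i False by auto
    qed
  qed
  have V2i: "wprod V2 dx istar = Gs" unfolding V2_def using extW_low[of istar istar] V2a_prod d0 by simp
  have "wprod V2 (d 0) L = U * (K * Wt) * Gs"
    unfolding V2_def using extW_prod[OF istarL r2' U' KWt, of V2a "d 0"] V2a_prod Gs d0 by simp
  also have "\<dots> = U * K * (Wt * Gs)"
    using assoc_mult_mat[OF U' K' Wt] assoc_mult_mat[OF mult_carrier_mat[OF U' K'] Wt Gs] by simp
  also have "\<dots> = Ms" using MsGs UKM by simp
  finally have V2prod: "wprod V2 dx L = Ms" using d0 by simp
  have part1: "W' = Ms" if "is_global_min d L (loss_base d L Xe Y) W" "W' = wprod W dx L" for W W'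
  proof -
    have net: "is_net d L W" and le: "loss_base d L Xe Y W \<le> loss_base d L Xe Y V1"
      using that(1) V1net unfolding is_global_min_def by auto
    have Wc: "W' \<in> carrier_mat dy dx" using wprod_carrier[OF net, of L] that(2) d0 dL by simp
    have "frob_sq (W' * Xe - Y) \<le> frob_sq (Ms * Xe - Y)"
      using le V1prod that(2) d0 unfolding loss_base_def by simp
    thus ?thesis using ls_opt(2)[OF Xe Y Ai Wc] unfolding Ms_def by simp
  qed
  have part2: "W' = Ms" if "is_global_min d L (loss_st d L istar lam Xe Y FX) W" "W' = wprod W dx L" for W W'
  proof -
    have net: "is_net d L W" and le: "loss_st d L istar lam Xe Y FX W \<le> loss_st d L istar lam Xe Y FX V2"
      using that(1) V2net unfolding is_global_min_def by auto
    have Wc: "W' \<in> carrier_mat dy dx" using wprod_carrier[OF net, of L] that(2) d0 dL by simp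
    have Wic: "wprod W dx istar \<in> carrier_mat (d istar) dx" using wprod_carrier[OF net, of istar] istarL d0 by simp
    have "frob_sq (wprod W dx istar * Xe - FX) = frob_sq ((wprod W dx istar - Gs) * Xe) + frob_sq (Gs * Xe - FX)"
      using ls_opt(1)[OF Xe FX Ai Wic] unfolding Gs_def by simp
    hence ge: "frob_sq (wprod W dx istar * Xe - FX) \<ge> frob_sq (Gs * Xe - FX)"
      using frob_nonneg[of "(wprod W dx istar - Gs) * Xe"] by linarith
    have "frob_sq (W' * Xe - Y) + lam * frob_sq (wprod W dx istar * Xe - FX)
        \<le> frob_sq (Ms * Xe - Y) + lam * frob_sq (Gs * Xe - FX)"
      using le V2prod V2i that(2) d0 unfolding loss_st_def by simp
    moreover have "lam * frob_sq (Gs * Xe - FX) \<le> lam * frob_sq (wprod W dx istar * Xe - FX)"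
      using ge lam by (intro mult_left_mono) auto
    ultimately have "frob_sq (W' * Xe - Y) \<le> frob_sq (Ms * Xe - Y)" by linarith
    thus ?thesis using ls_opt(2)[OF Xe Y Ai Wc] unfolding Ms_def by simp
  qed
  show ?thesis using part1 part2 unfolding Xe_def[symmetric] FX_def[symmetric] Ms_def[symmetric] Ai_def[symmetric]
    by blast
qed


end
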